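(* Let $S$ be a nonempty subset of $\mathbb{N}^\times\setminus\{1\}$, and let $B$ be a unital C*-algebra generated by a family of isometries $\{S_n\}_{n\in S}$ and a unitary $U$ such that for all $n\in S$: $S_nU=U^nS_n$ and $\sum_{i=0}^{n-1}U^iS_nS_n^*U^{-i}=1_B$. Then $S_nS_m=S_mS_n$ for all $n,m\in S$ if and only if for all $n,m\in S$, $$S_n^*S_m=\sum_{\substack{0\le l\le nm-1\\ l\in n\mathbb{Z}\cap m\mathbb{Z}}}U^{l/n}S_mS_n^*U^{-l/m}.$$
   Context: $\mathbb{N}^\times$ denotes the multiplicative semigroup of positive integers. *)

theory Defs
  imports Complex_Main
begin

class scaleC =
  fixes scaleC :: "complex \<Rightarrow> 'a \<Rightarrow> 'a" (infixr "*\<^sub>C" 75)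

class complex_vector = real_vector + scaleC +
  assumes scaleC_add_right: "a *\<^sub>C (x + y) = a *\<^sub>C x + a *\<^sub>C y"
    and scaleC_add_left: "(a + b) *\<^sub>C x = a *\<^sub>C x + b *\<^sub>C x"
    and scaleC_scaleC: "a *\<^sub>C (b *\<^sub>C x) = (a * b) *\<^sub>C x"
    and scaleC_one: "1 *\<^sub>C x = x"
    and scaleR_scaleC: "scaleR r x = complex_of_real r *\<^sub>C x"

text \<open>Unital C*-algebras: complete normed unital complex algebras with an
  involution satisfying the C*-identity.  (The zero algebra is allowed.)\<close>
class cstar_algebra = complex_vector + real_normed_algebra + ring_1 + banach +
  fixes cstar :: "'a \<Rightarrow> 'a"
  assumes norm_scaleC: "norm (a *\<^sub>C x) = cmod a * norm x"
    and scaleC_mult_left: "(a *\<^sub>C x) * y = a *\<^sub>C (x * y)"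
    and scaleC_mult_right: "x * (a *\<^sub>C y) = a *\<^sub>C (x * y)"
    and cstar_cstar: "cstar (cstar x) = x"
    and cstar_add: "cstar (x + y) = cstar x + cstar y"
    and cstar_scaleC: "cstar (a *\<^sub>C x) = cnj a *\<^sub>C cstar x"
    and cstar_mult: "cstar (x * y) = cstar y * cstar x"
    and cstar_identity: "norm (cstar x * x) = norm x ^ 2"

definition isometry :: "'a::cstar_algebra \<Rightarrow> bool" where
  "isometry s \<longleftrightarrow> cstar s * s = 1"

definition unitary :: "'a::cstar_algebra \<Rightarrow> bool" where
  "unitary u \<longleftrightarrow> cstar u * u = 1 \<and> u * cstar u = 1"

definition star_subalgebra :: "'a::cstar_algebra set \<Rightarrow> bool" where
  "star_subalgebra A \<longleftrightarrow> 1 \<in> A \<and>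
     (\<forall>x\<in>A. \<forall>y\<in>A. x + y \<in> A \<and> x * y \<in> A) \<and>
     (\<forall>x\<in>A. \<forall>a. a *\<^sub>C x \<in> A) \<and> (\<forall>x\<in>A. cstar x \<in> A)"

definition cstar_generated_by :: "'a::cstar_algebra set \<Rightarrow> bool" where
  "cstar_generated_by G \<longleftrightarrow>
     (\<forall>A. closed A \<and> star_subalgebra A \<and> G \<subseteq> A \<longrightarrow> A = UNIV)"

end

theory Submission
  imports Defs
begin

lemma cstar_one: "cstar (1::'a::cstar_algebra) = 1"
proof -
  have "cstar (cstar (1::'a) * 1) = cstar 1 * cstar (cstar 1)" by (rule cstar_mult)
  then have "cstar (cstar (1::'a)) = cstar 1" by (simp add: cstar_cstar)
  then show ?thesis by (simp add: cstar_cstar)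
qed

lemma cstar_zero: "cstar (0::'a::cstar_algebra) = 0"
proof -
  have "cstar (0::'a) = cstar (0 + 0)" by simp
  also have "\<dots> = cstar 0 + cstar 0" by (rule cstar_add)
  finally show ?thesis by simp
qed

lemma cstar_minus: "cstar (- x::'a::cstar_algebra) = - cstar x"
proof -
  have "cstar (- x) + cstar x = 0" using cstar_add[of "-x" x] by (simp add: cstar_zero)
  then show ?thesis by (simp add: add_eq_0_iff)
qed

lemma cstar_diff: "cstar (x - y::'a::cstar_algebra) = cstar x - cstar y"
  using cstar_add[of x "-y"] by (simp add: cstar_minus)

lemma cstar_sum: "cstar (\<Sum>i\<in>A. f i) = (\<Sum>i\<in>A. cstar (f i::'a::cstar_algebra))"
  by (induct A rule: infinite_finite_induct) (auto simp: cstar_zero cstar_add)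

lemma cstar_power: "cstar (x ^ n::'a::cstar_algebra) = cstar x ^ n"
  by (induct n) (auto simp: cstar_one cstar_mult power_commutes)

lemma cstar_scaleR: "cstar (r *\<^sub>R x::'a::cstar_algebra) = r *\<^sub>R cstar x"
  by (simp add: scaleR_scaleC cstar_scaleC)

lemma norm_cstar_le: "norm (x::'a::cstar_algebra) \<le> norm (cstar x)"
proof (cases "norm x = 0")
  case True then show ?thesis by simp
next
  case False
  have "norm x ^ 2 = norm (cstar x * x)" by (simp add: cstar_identity)
  also have "\<dots> \<le> norm (cstar x) * norm x" by (rule norm_mult_ineq)
  finally have "norm x * norm x \<le> norm (cstar x) * norm x" by (simp add: power2_eq_square)
  then show ?thesis using False by (simp add: mult_le_cancel_right)
qed

lemma norm_cstar: "norm (cstar x::'a::cstar_algebra) = norm x"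
  using norm_cstar_le[of x] norm_cstar_le[of "cstar x"] by (simp add: cstar_cstar)

lemma norm_mult_cstar: "norm (x * cstar x::'a::cstar_algebra) = norm x ^ 2"
  using cstar_identity[of "cstar x"] by (simp add: cstar_cstar norm_cstar)

lemma sa_sq: "cstar h = h \<Longrightarrow> norm (h * h::'a::cstar_algebra) = norm h ^ 2"
  using cstar_identity[of h] by simp

lemma sa_pow2: "cstar h = h \<Longrightarrow> norm (h ^ (2 ^ k)::'a::cstar_algebra) = norm h ^ (2 ^ k)"
proof (induct k)
  case 0 then show ?case by simp
next
  case (Suc k)
  have sa: "cstar (h ^ (2^k)) = h ^ (2^k)" using Suc by (simp add: cstar_power)
  have "h ^ (2 ^ Suc k) = h ^ (2^k) * h ^ (2^k)" by (simp add: power_add[symmetric] mult_2)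
  then have "norm (h ^ (2 ^ Suc k)) = norm (h ^ (2^k)) ^ 2" using sa_sq[OF sa] by simp
  also have "\<dots> = norm h ^ (2 ^ Suc k)" using Suc by (simp add: power_mult[symmetric] mult.commute)
  finally show ?case .
qed

lemma proj_norm_le: assumes "cstar e = e" "e * e = e" shows "norm (e::'a::cstar_algebra) \<le> 1"
proof -
  have "norm e ^ 2 = norm e" using sa_sq[OF assms(1)] assms(2) by simp
  then have "norm e * (norm e - 1) = 0" by (simp add: power2_eq_square algebra_simps)
  then show ?thesis by auto
qed

lemma norm_one_le: "norm (1::'a::cstar_algebra) \<le> 1"
  by (rule proj_norm_le) (simp_all add: cstar_one)

lemma norm_power_le: "norm (x ^ n::'a::cstar_algebra) \<le> norm x ^ n"
proof (induct n)
  case 0 then show ?case using norm_one_le by simp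
next
  case (Suc n)
  have "norm (x ^ Suc n) \<le> norm x * norm (x ^ n)" by (simp add: norm_mult_ineq)
  also have "\<dots> \<le> norm x * norm x ^ n" using Suc by (simp add: mult_left_mono)
  finally show ?case by simp
qed

lemma pow2_limit:
  fixes x y :: real
  assumes "0 \<le> x" "0 \<le> y" "\<And>k. x ^ (2 ^ k) \<le> 2 * y ^ (2 ^ k)"
  shows "x \<le> y"
proof (rule ccontr)
  assume "\<not> x \<le> y"
  then have xy: "y < x" by simp
  show False
  proof (cases "y = 0")
    case True
    then have "x ^ (2^0) \<le> 0" using assms(3)[of 0] by simp
    then show False using xy True by simp
  next
    case False
    then have yp: "0 < y" using assms by simp
    define r where "r = x / y"
    have r1: "1 < r" using xy yp by (simp add: r_def)
    obtain k where k: "1 / (r - 1) < real k" using reals_Archimedean2 by blast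
    have k2: "real k < 2 ^ k" using less_exp[of k] by (metis of_nat_less_iff of_nat_numeral of_nat_power)
    have "1 < real k * (r - 1)" using k r1 by (simp add: divide_less_eq)
    also have "\<dots> < 2 ^ k * (r - 1)" using k2 r1 by (simp add: mult_strict_right_mono)
    finally have kk: "1 < real (2 ^ k) * (r - 1)" by simp
    have "1 + real (2^k) * (r - 1) \<le> (1 + (r - 1)) ^ (2^k)"
      by (rule Bernoulli_inequality) (use r1 in simp)
    then have "2 < r ^ (2^k)" using kk by simp
    moreover have "r ^ (2^k) = x ^ (2^k) / y ^ (2^k)" by (simp add: r_def power_divide)
    ultimately have "2 * y ^ (2^k) < x ^ (2^k)" using yp by (simp add: less_divide_eq)
    then show False using assms(3)[of k] by simp
  qed
qed


lemma block_pow: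
  fixes e c :: "'a::cstar_algebra"
  assumes "e * e = e"
  shows "(a *\<^sub>R (1 - e) + e * c * e) ^ Suc N = (a ^ Suc N) *\<^sub>R (1 - e) + (e * c * e) ^ Suc N"
proof (induct N)
  case 0 then show ?case by simp
next
  case (Suc N)
  have fe: "(1 - e) * e = 0" "e * (1 - e) = 0" "(1 - e) * (1 - e) = 1 - e"
    using assms by (simp_all add: algebra_simps)
  have D1: "(1 - e) * (e * c * e) ^ Suc N = 0"
    by (simp add: mult.assoc[symmetric] fe)
  have D2: "(e * c * e) * (1 - e) = 0"
    by (simp add: mult.assoc fe)
  have "(a *\<^sub>R (1 - e) + e * c * e) ^ Suc (Suc N) =
      (a *\<^sub>R (1 - e) + e * c * e) * ((a ^ Suc N) *\<^sub>R (1 - e) + (e * c * e) ^ Suc N)"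
    using Suc by (simp only: power_Suc[of _ "Suc N"])
  also have "\<dots> = (a * a ^ Suc N) *\<^sub>R ((1 - e) * (1 - e)) + a *\<^sub>R ((1 - e) * (e * c * e) ^ Suc N)
      + (a ^ Suc N) *\<^sub>R ((e * c * e) * (1 - e)) + (e * c * e) * (e * c * e) ^ Suc N"
    by (simp add: algebra_simps)
  also have "\<dots> = (a ^ Suc (Suc N)) *\<^sub>R (1 - e) + (e * c * e) ^ Suc (Suc N)"
    by (simp only: D1 D2 fe) simp
  finally show ?case .
qed

lemma block_norm:
  fixes e c :: "'a::cstar_algebra"
  assumes e: "cstar e = e" "e * e = e" and c: "cstar c = c"
  shows "norm (a *\<^sub>R (1 - e) + e * c * e) \<le> max \<bar>a\<bar> (norm c)"
proof -
  define z where "z = a *\<^sub>R (1 - e) + e * c * e"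
  define M where "M = max \<bar>a\<bar> (norm c)"
  have zsa: "cstar z = z" unfolding z_def
    by (simp add: cstar_add cstar_scaleR cstar_diff cstar_one cstar_mult e c mult.assoc)
  have f: "cstar (1 - e) = 1 - e" "(1 - e) * (1 - e) = 1 - e"
    using e by (simp_all add: cstar_diff cstar_one algebra_simps)
  have nf: "norm (1 - e) \<le> 1" by (rule proj_norm_le[OF f])
  have ne: "norm e \<le> 1" by (rule proj_norm_le[OF e])
  have nD: "norm (e * c * e) \<le> norm c"
  proof -
    have "norm (e * c * e) \<le> norm e * norm c * norm e"
      by (meson norm_mult_ineq order_trans mult_right_mono norm_ge_zero)
    also have "\<dots> \<le> 1 * norm c * 1" using ne
      by (intro mult_mono) (auto intro: mult_le_one)
    finally show ?thesis by simp
  qed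
  have bound: "norm (z ^ Suc N) \<le> 2 * M ^ Suc N" for N
  proof -
    have "norm (z ^ Suc N) \<le> norm ((a ^ Suc N) *\<^sub>R (1 - e)) + norm ((e * c * e) ^ Suc N)"
      unfolding z_def block_pow[OF e(2)] by (rule norm_triangle_ineq)
    also have "\<dots> \<le> \<bar>a\<bar> ^ Suc N + norm c ^ Suc N"
    proof (rule add_mono)
      show "norm ((a ^ Suc N) *\<^sub>R (1 - e)) \<le> \<bar>a\<bar> ^ Suc N"
        using nf by (simp only: norm_scaleR power_abs[symmetric]) (simp add: mult_left_le)
      have "norm ((e * c * e) ^ Suc N) \<le> norm (e * c * e) ^ Suc N" by (rule norm_power_le)
      also have "\<dots> \<le> norm c ^ Suc N" using nD by (intro power_mono) simp_all
      finally show "norm ((e * c * e) ^ Suc N) \<le> norm c ^ Suc N" .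
    qed
    also have "\<dots> \<le> M ^ Suc N + M ^ Suc N"
      by (intro add_mono power_mono) (auto simp: M_def)
    finally show ?thesis by simp
  qed
  have "norm z \<le> M"
  proof (rule pow2_limit)
    show "0 \<le> M" by (simp add: M_def)
    fix k :: nat
    obtain N where N: "(2::nat) ^ k = Suc N" by (metis not0_implies_Suc power_not_zero zero_neq_numeral)
    have "norm z ^ (2 ^ k) = norm (z ^ (2 ^ k))" using sa_pow2[OF zsa] by simp
    also have "\<dots> \<le> 2 * M ^ (2 ^ k)" using bound[of N] N by simp
    finally show "norm z ^ (2 ^ k) \<le> 2 * M ^ (2 ^ k)" .
  qed simp
  then show ?thesis by (simp add: z_def M_def)
qed


lemma scaleC_zero_right: "a *\<^sub>C (0::'a::complex_vector) = 0"
  using scaleC_add_right[of a "0::'a" 0] by simp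

lemma scaleC_zero_left: "0 *\<^sub>C (x::'a::complex_vector) = 0"
  using scaleC_add_left[of 0 0 x] by simp

lemma scaleC_minus_right: "a *\<^sub>C (- x::'a::complex_vector) = - (a *\<^sub>C x)"
  using scaleC_add_right[of a x "-x"] by (simp add: scaleC_zero_right eq_neg_iff_add_eq_0 add.commute)

lemma scaleC_diff_right: "a *\<^sub>C (x - y::'a::complex_vector) = a *\<^sub>C x - a *\<^sub>C y"
  using scaleC_add_right[of a x "-y"] by (simp add: scaleC_minus_right)

lemma scaleC_sum_right: "a *\<^sub>C (\<Sum>i\<in>A. f i) = (\<Sum>i\<in>A. a *\<^sub>C (f i::'a::complex_vector))"
  by (induct A rule: infinite_finite_induct) (auto simp: scaleC_zero_right scaleC_add_right)

lemma scaleC_sum_left: "(\<Sum>i\<in>A. f i) *\<^sub>C x = (\<Sum>i\<in>A. f i *\<^sub>C (x::'a::complex_vector))"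
  by (induct A rule: infinite_finite_induct) (auto simp: scaleC_zero_left scaleC_add_left)

lemma scaleC_of_real: "complex_of_real r *\<^sub>C x = r *\<^sub>R (x::'a::complex_vector)"
  by (simp add: scaleR_scaleC)

lemma scaleC_power: "(c *\<^sub>C x) ^ k = c ^ k *\<^sub>C (x::'a::cstar_algebra) ^ k"
  by (induct k) (auto simp: scaleC_one scaleC_mult_left scaleC_mult_right scaleC_scaleC mult.commute)

lemma of_nat_mult_scaleC: "of_nat m * (x::'a::cstar_algebra) = (of_nat m::complex) *\<^sub>C x"
  by (induct m) (auto simp: scaleC_zero_left scaleC_add_left scaleC_one algebra_simps)

lemma binom1: "(1 + x::'a::ring_1) ^ n = (\<Sum>k\<le>n. of_nat (n choose k) * x ^ k)"
proof (induct n)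
  case 0 then show ?case by simp
next
  case (Suc n)
  have "(1 + x) ^ Suc n = (\<Sum>k\<le>n. of_nat (n choose k) * x ^ k) * (1 + x)"
    by (simp only: power_Suc2 Suc)
  also have "\<dots> = (\<Sum>k\<le>n. of_nat (n choose k) * x ^ k) + (\<Sum>k\<le>n. of_nat (n choose k) * x ^ Suc k)"
    by (simp add: distrib_left sum_distrib_right mult.assoc power_commutes)
  also have "(\<Sum>k\<le>n. of_nat (n choose k) * x ^ k) = 1 + (\<Sum>k\<le>n. of_nat (n choose Suc k) * x ^ Suc k)"
  proof -
    have "(\<Sum>k\<le>Suc n. of_nat (n choose k) * x ^ k) = (\<Sum>k\<le>n. of_nat (n choose k) * x ^ k)"
      by (simp add: binomial_eq_0)
    moreover have "(\<Sum>k\<le>Suc n. of_nat (n choose k) * x ^ k) = 1 + (\<Sum>k\<le>n. of_nat (n choose Suc k) * x ^ Suc k)"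
      by (subst sum.atMost_Suc_shift) simp
    ultimately show ?thesis by simp
  qed
  also have "1 + (\<Sum>k\<le>n. of_nat (n choose Suc k) * x ^ Suc k) + (\<Sum>k\<le>n. of_nat (n choose k) * x ^ Suc k)
      = (\<Sum>k\<le>Suc n. of_nat (Suc n choose k) * x ^ k)"
    by (subst sum.atMost_Suc_shift) (simp add: sum.distrib distrib_right add.assoc add.commute)
  finally show ?case .
qed

lemma binomC: "(1 + c *\<^sub>C h::'a::cstar_algebra) ^ n = (\<Sum>k\<le>n. (of_nat (n choose k) * c ^ k) *\<^sub>C h ^ k)"
  by (simp add: binom1 scaleC_power of_nat_mult_scaleC scaleC_mult_right scaleC_scaleC mult.commute)


lemma roots_zero:
  assumes "0 < N" "m \<noteq> 0" "\<bar>m\<bar> < int N"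
  shows "(\<Sum>j<N. cis (real j * (of_int m * (2 * pi / real N)))) = 0"
proof -
  define x where "x = cis (of_int m * (2 * pi / real N))"
  have xN: "x ^ N = 1"
  proof -
    have "x ^ N = cis (2 * pi * of_int m)" unfolding x_def DeMoivre using assms(1)
      by (simp add: field_simps)
    also have "\<dots> = 1" by (rule cis_multiple_2pi) simp
    finally show ?thesis .
  qed
  have x1: "x \<noteq> 1"
  proof
    assume "x = 1"
    then have "cos (of_int m * (2 * pi / real N)) = 1" unfolding x_def
      by (metis cis.simps(1) one_complex.simps(1))
    then obtain n :: int where n: "of_int m * (2 * pi / real N) = of_int n * 2 * pi"
      using cos_one_2pi_int by blast
    then have "real_of_int m = real_of_int n * real N" using assms(1)
      by (simp add: field_simps)
    then have "m = n * int N" by (metis of_int_eq_iff of_int_mult of_int_of_nat_eq)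
    moreover have "n \<noteq> 0" using calculation assms(2) by auto
    ultimately have "\<bar>m\<bar> = \<bar>n\<bar> * int N" "1 \<le> \<bar>n\<bar>" by (auto simp: abs_mult)
    then have "int N \<le> \<bar>m\<bar>" by (metis mult_le_cancel_right1 of_nat_0_le_iff mult.commute mult_left_mono mult_1 order_trans le_less)
    then show False using assms(3) by simp
  qed
  have "(\<Sum>j<N. cis (real j * (of_int m * (2 * pi / real N)))) = (\<Sum>j<N. x ^ j)"
    unfolding x_def DeMoivre ..
  also have "\<dots> = 0" using geometric_sum[OF x1, of N] xN by simp
  finally show ?thesis .
qed


lemma scaleC_uminus_left: "(- a) *\<^sub>C (x::'a::complex_vector) = - (a *\<^sub>C x)"
  using scaleC_add_left[of a "-a" x] by (simp add: scaleC_zero_left eq_neg_iff_add_eq_0 add.commute)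

lemma conv_bound:
  fixes x :: "'a::cstar_algebra"
  assumes "norm (1 + x) \<le> 1" "norm (1 - x) \<le> 1" "\<bar>a\<bar> \<le> 1"
  shows "norm (1 + a *\<^sub>R x) \<le> 1"
proof -
  have eq: "1 + a *\<^sub>R x = ((1 + a) / 2) *\<^sub>R (1 + x) + ((1 - a) / 2) *\<^sub>R (1 - x)"
  proof -
    have "((1 + a) / 2) *\<^sub>R (1 + x) + ((1 - a) / 2) *\<^sub>R (1 - x)
        = ((1 + a) / 2 + (1 - a) / 2) *\<^sub>R 1 + ((1 + a) / 2 - (1 - a) / 2) *\<^sub>R x"
      by (simp only: scaleR_add_right scaleR_diff_right scaleR_add_left scaleR_diff_left) simp
    also have "\<dots> = 1 + a *\<^sub>R x" by (simp add: field_simps)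
    finally show ?thesis by simp
  qed
  have "norm (1 + a *\<^sub>R x) \<le> norm (((1 + a) / 2) *\<^sub>R (1 + x)) + norm (((1 - a) / 2) *\<^sub>R (1 - x))"
    unfolding eq by (rule norm_triangle_ineq)
  also have "\<dots> \<le> (1 + a) / 2 * 1 + (1 - a) / 2 * 1"
    using assms by (intro add_mono) (auto simp: mult_left_le)
  finally show ?thesis by argo
qed


lemma sq_le1: "0 \<le> (r::real) \<Longrightarrow> r ^ 2 \<le> 1 \<Longrightarrow> r \<le> 1"
  by (metis abs_of_nonneg abs_square_le_1)

lemma L_disk:
  fixes h :: "'a::cstar_algebra"
  assumes sa: "cstar h = h" and n1: "norm (1 + h) \<le> 1" and n2: "norm (1 - h) \<le> 1"
    and z: "cmod z \<le> 1/2"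
  shows "norm (1 + z *\<^sub>C h) \<le> 1"
proof -
  define g where "g = \<i> *\<^sub>C h"
  have csg: "cstar g = - g" unfolding g_def
    by (simp add: cstar_scaleC sa scaleC_uminus_left)
  have gg: "g * g = - (h * h)" unfolding g_def
    by (simp add: scaleC_mult_left scaleC_mult_right scaleC_scaleC scaleC_uminus_left scaleC_one)
  have sa1: "cstar (1 + h) = 1 + h" "cstar (1 - h) = 1 - h"
    by (simp_all add: cstar_add cstar_diff cstar_one sa)
  have hh: "norm (1 + h * h) \<le> 1"
  proof -
    have "(1 + h) * (1 + h) + (1 - h) * (1 - h) = (1 + h * h) + (1 + h * h)"
      by (simp add: algebra_simps)
    then have "norm ((1 + h * h) + (1 + h * h)) \<le> norm ((1 + h) * (1 + h)) + norm ((1 - h) * (1 - h))"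
      by (metis norm_triangle_ineq)
    also have "\<dots> = norm (1 + h) ^ 2 + norm (1 - h) ^ 2" using sa_sq[OF sa1(1)] sa_sq[OF sa1(2)] by simp
    also have "\<dots> \<le> 1 + 1" using n1 n2
      by (intro add_mono) (simp_all add: power_le_one)
    finally have "norm ((1 + h * h) + (1 + h * h)) \<le> 2" by simp
    moreover have "(1 + h * h) + (1 + h * h) = 2 *\<^sub>R (1 + h * h)" by (simp add: scaleR_2)
    ultimately show ?thesis by simp
  qed
  have g1: "norm (1 + g) \<le> 1"
  proof -
    have "norm (1 + g) ^ 2 = norm (cstar (1 + g) * (1 + g))" by (simp add: cstar_identity)
    also have "cstar (1 + g) * (1 + g) = 1 + h * h"
    proof -
      have "cstar (1 + g) = 1 - g" by (simp add: cstar_add cstar_one csg)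
      moreover have "(1 - g) * (1 + g) = 1 - g * g" by (simp add: algebra_simps)
      ultimately show ?thesis by (simp add: gg)
    qed
    finally have "norm (1 + g) ^ 2 \<le> 1" using hh by simp
    then show ?thesis by (rule sq_le1[OF norm_ge_zero])
  qed
  have g2: "norm (1 - g) \<le> 1"
  proof -
    have "norm (1 - g) ^ 2 = norm (cstar (1 - g) * (1 - g))" by (simp add: cstar_identity)
    also have "cstar (1 - g) * (1 - g) = 1 + h * h"
    proof -
      have "cstar (1 - g) = 1 + g" by (simp add: cstar_diff cstar_one csg)
      moreover have "(1 + g) * (1 - g) = 1 - g * g" by (simp add: algebra_simps)
      ultimately show ?thesis by (simp add: gg)
    qed
    finally have "norm (1 - g) ^ 2 \<le> 1" using hh by simp
    then show ?thesis by (rule sq_le1[OF norm_ge_zero])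
  qed
  have zh: "z *\<^sub>C h = Re z *\<^sub>R h + Im z *\<^sub>R g"
  proof -
    have zz: "complex_of_real (Re z) + complex_of_real (Im z) * \<i> = z"
      by (simp add: complex_eq_iff)
    have "z *\<^sub>C h = (complex_of_real (Re z) + complex_of_real (Im z) * \<i>) *\<^sub>C h"
      by (simp only: zz)
    also have "\<dots> = Re z *\<^sub>R h + Im z *\<^sub>R g"
      by (simp add: scaleC_add_left scaleC_scaleC[symmetric] scaleC_of_real g_def)
    finally show ?thesis .
  qed
  have re: "\<bar>2 * Re z\<bar> \<le> 1" "\<bar>2 * Im z\<bar> \<le> 1"
    using abs_Re_le_cmod[of z] abs_Im_le_cmod[of z] z by simp_all
  have a: "norm (1 + (2 * Re z) *\<^sub>R h) \<le> 1" by (rule conv_bound[OF n1 n2 re(1)])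
  have b: "norm (1 + (2 * Im z) *\<^sub>R g) \<le> 1" by (rule conv_bound[OF g1 g2 re(2)])
  have eq: "1 + z *\<^sub>C h = (1/2) *\<^sub>R (1 + (2 * Re z) *\<^sub>R h) + (1/2) *\<^sub>R (1 + (2 * Im z) *\<^sub>R g)"
  proof -
    have half: "(1/2) *\<^sub>R (1::'a) + (1/2) *\<^sub>R 1 = 1"
    proof -
      have "(1/2) *\<^sub>R (1::'a) + (1/2) *\<^sub>R 1 = (1/2 + 1/2) *\<^sub>R 1" by (rule scaleR_add_left[symmetric])
      then show ?thesis by simp
    qed
    have e1: "(1/2) *\<^sub>R (1 + (2 * Re z) *\<^sub>R h) = (1/2) *\<^sub>R 1 + Re z *\<^sub>R h"
      by (simp add: scaleR_add_right)
    have e2: "(1/2) *\<^sub>R (1 + (2 * Im z) *\<^sub>R g) = (1/2) *\<^sub>R 1 + Im z *\<^sub>R g"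
      by (simp add: scaleR_add_right)
    have "1 + z *\<^sub>C h = ((1/2) *\<^sub>R 1 + (1/2) *\<^sub>R 1) + (Re z *\<^sub>R h + Im z *\<^sub>R g)"
      by (simp only: half zh)
    also have "\<dots> = ((1/2) *\<^sub>R 1 + Re z *\<^sub>R h) + ((1/2) *\<^sub>R 1 + Im z *\<^sub>R g)"
      by (simp only: add.assoc add.left_commute)
    finally show ?thesis by (simp only: e1 e2)
  qed
  have "norm (1 + z *\<^sub>C h) \<le> (1/2) * norm (1 + (2 * Re z) *\<^sub>R h) + (1/2) * norm (1 + (2 * Im z) *\<^sub>R g)"
    unfolding eq by (rule order_trans[OF norm_triangle_ineq]) simp
  also have "\<dots> \<le> 1" using a b by simp
  finally show ?thesis .
qed


lemma L_bound:
  fixes h :: "'a::cstar_algebra"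
  assumes sa: "cstar h = h" and n1: "norm (1 + h) \<le> 1" and n2: "norm (1 - h) \<le> 1"
    and M: "1 \<le> M"
  shows "real M * norm h \<le> 2"
proof -
  define N where "N = Suc M"
  define t where "t = 2 * pi / real N"
  define \<rho> :: complex where "\<rho> = 1/2"
  define X where "X = (\<Sum>j<N. cis (- (real j * t)) *\<^sub>C (1 + (\<rho> * cis (real j * t)) *\<^sub>C h) ^ M)"
  have Xle: "norm X \<le> real N"
  proof -
    have "norm X \<le> (\<Sum>j<N. norm (cis (- (real j * t)) *\<^sub>C (1 + (\<rho> * cis (real j * t)) *\<^sub>C h) ^ M))"
      unfolding X_def by (rule norm_sum)
    also have "\<dots> \<le> (\<Sum>j<N. 1)"
    proof (rule sum_mono)
      fix j
      have d: "norm (1 + (\<rho> * cis (real j * t)) *\<^sub>C h) \<le> 1"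
        by (rule L_disk[OF sa n1 n2]) (simp add: \<rho>_def norm_mult)
      have "norm ((1 + (\<rho> * cis (real j * t)) *\<^sub>C h) ^ M) \<le> norm (1 + (\<rho> * cis (real j * t)) *\<^sub>C h) ^ M"
        by (rule norm_power_le)
      also have "\<dots> \<le> 1" using d by (simp add: power_le_one)
      finally show "norm (cis (- (real j * t)) *\<^sub>C (1 + (\<rho> * cis (real j * t)) *\<^sub>C h) ^ M) \<le> 1"
        by (simp add: norm_scaleC)
    qed
    finally show ?thesis by simp
  qed
  have inner: "(\<Sum>j<N. cis (- (real j * t)) * (of_nat (M choose k) * (\<rho> * cis (real j * t)) ^ k))
      = (if k = 1 then of_nat M * \<rho> * of_nat N else 0)" if k: "k \<le> M" for k
  proof -
    have "(\<Sum>j<N. cis (- (real j * t)) * (of_nat (M choose k) * (\<rho> * cis (real j * t)) ^ k))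
        = of_nat (M choose k) * \<rho> ^ k * (\<Sum>j<N. cis (real j * (of_int (int k - 1) * t)))"
    proof -
      have "cis (- (real j * t)) * (of_nat (M choose k) * (\<rho> * cis (real j * t)) ^ k)
          = of_nat (M choose k) * \<rho> ^ k * cis (real j * (of_int (int k - 1) * t))" (is "?l j = ?r j") for j
      proof -
        have "cis (- (real j * t)) * cis (real j * t) ^ k = cis (real j * (of_int (int k - 1) * t))"
          by (simp add: DeMoivre cis_mult algebra_simps)
        then show ?thesis by (simp add: power_mult_distrib algebra_simps)
      qed
      then show ?thesis unfolding sum_distrib_left by (intro sum.cong) simp_all
    qed
    also have "\<dots> = (if k = 1 then of_nat M * \<rho> * of_nat N else 0)"
    proof (cases "k = 1")
      case True then show ?thesis by simp
    next
      case False
      have "(\<Sum>j<N. cis (real j * (of_int (int k - 1) * t))) = 0"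
        unfolding t_def by (rule roots_zero) (use k M False in \<open>auto simp: N_def\<close>)
      then show ?thesis using False by simp
    qed
    finally show ?thesis .
  qed
  have Xeq: "X = (of_nat M * \<rho> * of_nat N) *\<^sub>C h"
  proof -
    have "X = (\<Sum>j<N. \<Sum>k\<le>M. (cis (- (real j * t)) * (of_nat (M choose k) * (\<rho> * cis (real j * t)) ^ k)) *\<^sub>C h ^ k)"
      unfolding X_def binomC by (simp add: scaleC_sum_right scaleC_scaleC)
    also have "\<dots> = (\<Sum>k\<le>M. \<Sum>j<N. (cis (- (real j * t)) * (of_nat (M choose k) * (\<rho> * cis (real j * t)) ^ k)) *\<^sub>C h ^ k)"
      by (rule sum.swap)
    also have "\<dots> = (\<Sum>k\<le>M. (if k = 1 then of_nat M * \<rho> * of_nat N else 0) *\<^sub>C h ^ k)"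
      by (rule sum.cong) (simp_all add: scaleC_sum_left[symmetric] inner)
    also have "\<dots> = (\<Sum>k\<in>{1}. (if k = 1 then of_nat M * \<rho> * of_nat N else 0) *\<^sub>C h ^ k)"
      by (rule sum.mono_neutral_right) (use M in \<open>auto simp: scaleC_zero_left\<close>)
    finally show ?thesis by simp
  qed
  have "norm X = real M * (1/2) * real N * norm h"
    unfolding Xeq by (simp add: norm_scaleC norm_mult \<rho>_def)
  then have "real M * (1/2) * real N * norm h \<le> real N" using Xle by simp
  then have "real N * (real M * norm h) \<le> real N * 2" by (simp add: algebra_simps)
  moreover have "0 < real N" by (simp add: N_def)
  ultimately show ?thesis using mult_le_cancel_left_pos[of "real N" "real M * norm h" 2] by blast
qed

lemma L_zero:
  fixes h :: "'a::cstar_algebra"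
  assumes sa: "cstar h = h" and n1: "norm (1 + h) \<le> 1" and n2: "norm (1 - h) \<le> 1"
  shows "h = 0"
proof (rule ccontr)
  assume "h \<noteq> 0"
  then have p: "0 < norm h" by simp
  obtain M :: nat where M: "2 / norm h < real M" using reals_Archimedean2 by blast
  have "0 < 2 / norm h" using p by simp
  then have "0 < real M" using M by linarith
  then have "1 \<le> M" by simp
  from L_bound[OF sa n1 n2 this] have "real M * norm h \<le> 2" .
  with M p show False by (simp add: divide_less_eq mult.commute)
qed


definition proj :: "'a::cstar_algebra \<Rightarrow> bool" where
  "proj e \<longleftrightarrow> cstar e = e \<and> e * e = e"

lemma Q_bound:
  fixes e p :: "'a::cstar_algebra"
  assumes e: "proj e" and p: "proj p" and t: "1 \<le> t"
  shows "norm (t *\<^sub>R 1 - e * p * e) \<le> t"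
proof -
  define w where "w = t *\<^sub>R 1 - p"
  have csw: "cstar w = w" using p by (simp add: w_def proj_def cstar_diff cstar_scaleR cstar_one)
  have w1: "w = t *\<^sub>R (1 - p) + p * ((t - 1) *\<^sub>R 1) * p"
    using p by (simp add: w_def proj_def algebra_simps)
  have "norm w \<le> max \<bar>t\<bar> (norm ((t - 1) *\<^sub>R (1::'a)))"
    unfolding w1 by (rule block_norm) (use p in \<open>simp_all add: proj_def cstar_scaleR cstar_one\<close>)
  also have "\<dots> \<le> t"
  proof -
    have "norm ((t - 1) *\<^sub>R (1::'a)) \<le> t - 1" using norm_one_le[where 'a='a] t
      by (simp add: mult_left_le)
    then show ?thesis using t by simp
  qed
  finally have nw: "norm w \<le> t" .
  have eq: "t *\<^sub>R 1 - e * p * e = t *\<^sub>R (1 - e) + e * w * e"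
    using e by (simp add: w_def proj_def algebra_simps)
  have "norm (t *\<^sub>R 1 - e * p * e) \<le> max \<bar>t\<bar> (norm w)"
    unfolding eq by (rule block_norm) (use e csw in \<open>simp_all add: proj_def\<close>)
  also have "\<dots> \<le> t" using nw t by simp
  finally show ?thesis .
qed

lemma of_nat_scaleR_one: "(of_nat n :: 'a::cstar_algebra) = real n *\<^sub>R 1"
  by (induct n) (simp_all add: scaleR_add_left)

lemma proj_orth:
  fixes p :: "nat \<Rightarrow> 'a::cstar_algebra"
  assumes fin: "finite I" and pr: "\<And>i. i \<in> I \<Longrightarrow> proj (p i)" and s: "(\<Sum>i\<in>I. p i) = 1"
    and a: "a \<in> I" and b: "b \<in> I" and ab: "a \<noteq> b"
  shows "p a * p b = 0"
proof -
  define e where "e = p a"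
  define K where "K = I - {a}"
  define q where "q k = e * p k * e" for k
  have e: "proj e" using pr a by (simp add: e_def)
  have bK: "b \<in> K" using b ab by (simp add: K_def)
  have finK: "finite K" using fin by (simp add: K_def)
  have sK: "(\<Sum>k\<in>K. p k) = 1 - e"
    using sum.remove[OF fin a, of p] s by (simp add: K_def e_def algebra_simps)
  have sq: "(\<Sum>k\<in>K. q k) = 0"
  proof -
    have "(\<Sum>k\<in>K. q k) = e * (\<Sum>k\<in>K. p k) * e"
      by (simp add: q_def sum_distrib_left sum_distrib_right)
    also have "\<dots> = 0" using e by (simp add: sK proj_def algebra_simps)
    finally show ?thesis .
  qed
  define T where "T = real (card K)"
  have T1: "1 \<le> T" using bK finK by (simp add: T_def Suc_le_eq card_gt_0_iff) blast
  have qb_sa: "cstar (q b) = q b" using e pr[of b] b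
    by (simp add: q_def proj_def cstar_mult mult.assoc)
  have plus: "norm (T *\<^sub>R 1 + q b) \<le> T"
  proof -
    have sum_rest: "(\<Sum>k\<in>K - {b}. q k) = - q b"
      using sum.remove[OF finK bK, of q] sq by (simp add: eq_neg_iff_add_eq_0 add.commute)
    have "(\<Sum>k\<in>K - {b}. (1 - q k)) = of_nat (card (K - {b})) - (\<Sum>k\<in>K - {b}. q k)"
      by (simp add: sum_subtractf)
    also have "\<dots> = of_nat (card K) - 1 + q b"
    proof -
      have cK: "card (K - {b}) + 1 = card K" using finK bK
        by (simp add: card_Diff_singleton) (metis Suc_pred card_gt_0_iff empty_iff Suc_eq_plus1)
      then have "(of_nat (card K)::'a) = of_nat (card (K - {b})) + 1" by (metis of_nat_add of_nat_1)
      then show ?thesis by (simp add: sum_rest)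
    qed
    finally have eq: "T *\<^sub>R 1 + q b = 1 + (\<Sum>k\<in>K - {b}. (1 - q k))"
      by (simp add: T_def of_nat_scaleR_one[symmetric])
    have "norm (T *\<^sub>R 1 + q b) \<le> norm (1::'a) + (\<Sum>k\<in>K - {b}. norm (1 - q k))"
      unfolding eq by (rule order_trans[OF norm_triangle_ineq add_left_mono[OF norm_sum]])
    also have "\<dots> \<le> 1 + (\<Sum>k\<in>K - {b}. 1)"
    proof (intro add_mono sum_mono norm_one_le)
      fix k assume "k \<in> K - {b}"
      then have "proj (p k)" using pr by (simp add: K_def)
      from Q_bound[OF e this, of 1] show "norm (1 - q k) \<le> 1" by (simp add: q_def)
    qed
    also have "\<dots> = T"
    proof -
      have cK: "card (K - {b}) + 1 = card K" using finK bK
        by (simp add: card_Diff_singleton) (metis Suc_pred card_gt_0_iff empty_iff Suc_eq_plus1)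
      then show ?thesis by (simp add: T_def)
    qed
    finally show ?thesis .
  qed
  have minus: "norm (T *\<^sub>R 1 - q b) \<le> T"
    using Q_bound[OF e pr[OF b] T1] by (simp add: q_def)
  define h where "h = (1 / T) *\<^sub>R q b"
  have hsa: "cstar h = h" by (simp add: h_def cstar_scaleR qb_sa)
  have h1: "norm (1 + h) \<le> 1"
  proof -
    have "1 + h = (1 / T) *\<^sub>R (T *\<^sub>R 1 + q b)" using T1 by (simp add: h_def scaleR_add_right)
    then have "norm (1 + h) = (1 / T) * norm (T *\<^sub>R 1 + q b)" using T1 by simp
    also have "\<dots> \<le> (1 / T) * T" using plus T1 by (intro mult_left_mono) simp_all
    finally show ?thesis using T1 by simp
  qed
  have h2: "norm (1 - h) \<le> 1"
  proof -
    have "1 - h = (1 / T) *\<^sub>R (T *\<^sub>R 1 - q b)" using T1 by (simp add: h_def scaleR_diff_right)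
    then have "norm (1 - h) = (1 / T) * norm (T *\<^sub>R 1 - q b)" using T1 by simp
    also have "\<dots> \<le> (1 / T) * T" using minus T1 by (intro mult_left_mono) simp_all
    finally show ?thesis using T1 by simp
  qed
  have "h = 0" by (rule L_zero[OF hsa h1 h2])
  then have qb: "e * p b * e = 0" using T1 by (simp add: h_def q_def)
  have "norm (p b * e) ^ 2 = norm (cstar (p b * e) * (p b * e))" by (simp add: cstar_identity)
  also have "cstar (p b * e) = e * p b"
    using e pr[OF b] by (simp add: proj_def cstar_mult)
  also have "e * p b * (p b * e) = e * (p b * p b) * e" by (simp add: mult.assoc)
  also have "\<dots> = e * p b * e" using pr[OF b] by (simp add: proj_def)
  finally have "p b * e = 0" using qb by simp
  then have "cstar (p b * e) = 0" by (simp add: cstar_zero)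
  moreover have "cstar (p b * e) = e * p b"
    using e pr[OF b] by (simp add: proj_def cstar_mult)
  ultimately show ?thesis by (simp add: e_def)
qed


lemma powinv: "cstar u * u = (1::'a::cstar_algebra) \<Longrightarrow> cstar u ^ i * u ^ i = 1"
proof (induct i)
  case 0 then show ?case by simp
next
  case (Suc i)
  have "cstar u ^ Suc i * u ^ Suc i = cstar u ^ i * (cstar u * u) * u ^ i"
    by (simp only: power_Suc2[of "cstar u"] power_Suc[of u] mult.assoc)
  then show ?case using Suc by simp
qed

lemma powinv2: "u * cstar u = (1::'a::cstar_algebra) \<Longrightarrow> u ^ i * cstar u ^ i = 1"
  using powinv[of "cstar u" i] by (simp add: cstar_cstar)

lemma orth:
  fixes s u :: "'a::cstar_algebra"
  assumes s: "cstar s * s = 1" and u1: "cstar u * u = 1" and u2: "u * cstar u = 1"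
    and sum: "(\<Sum>i<n. u ^ i * s * cstar s * cstar u ^ i) = 1"
    and j: "0 < j" "j < n"
  shows "cstar s * u ^ j * s = 0"
proof -
  define p where "p i = u ^ i * s * cstar s * cstar u ^ i" for i
  have pr: "proj (p i)" for i
  proof -
    have "cstar (p i) = p i" by (simp add: p_def cstar_mult cstar_power cstar_cstar mult.assoc)
    moreover have "p i * p i = p i"
    proof -
      have "p i * p i = u ^ i * s * (cstar s * (cstar u ^ i * u ^ i) * s) * cstar s * cstar u ^ i"
        by (simp add: p_def mult.assoc)
      also have "\<dots> = p i" using powinv[OF u1, of i] s by (simp add: p_def)
      finally show ?thesis .
    qed
    ultimately show ?thesis by (simp add: proj_def)
  qed
  have "p 0 * p j = 0"
    by (rule proj_orth[of "{..<n}" p]) (use pr sum j in \<open>auto simp: p_def\<close>)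
  then have z: "s * cstar s * (u ^ j * s * cstar s * cstar u ^ j) = 0" by (simp add: p_def)
  have "cstar s * u ^ j * s = cstar s * (s * cstar s * (u ^ j * s * cstar s * cstar u ^ j)) * u ^ j * s"
  proof -
    have "cstar s * (s * cstar s * (u ^ j * s * cstar s * cstar u ^ j)) * u ^ j * s
        = (cstar s * s) * cstar s * u ^ j * s * cstar s * (cstar u ^ j * u ^ j) * s"
      by (simp add: mult.assoc)
    also have "\<dots> = cstar s * u ^ j * s" using s powinv[OF u1, of j] by (simp add: mult.assoc)
    finally show ?thesis by simp
  qed
  also have "\<dots> = 0" by (simp add: z)
  finally show ?thesis .
qed

lemma F1:
  fixes s u :: "'a::cstar_algebra"
  assumes "s * u = u ^ n * s"
  shows "s * u ^ k = u ^ (n * k) * s"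
proof (induct k)
  case 0 then show ?case by simp
next
  case (Suc k)
  have "s * u ^ Suc k = (s * u) * u ^ k" by (simp add: mult.assoc)
  also have "\<dots> = u ^ n * (s * u ^ k)" using assms by (simp add: mult.assoc)
  also have "\<dots> = u ^ (n * Suc k) * s" using Suc by (simp add: mult.assoc power_add)
  finally show ?case .
qed

lemma F2:
  fixes s u :: "'a::cstar_algebra"
  assumes su: "s * u = u ^ n * s" and u1: "cstar u * u = 1" and u2: "u * cstar u = 1"
  shows "cstar s * u ^ (n * k) = u ^ k * cstar s"
proof -
  have "cstar u ^ (n * k) * s = cstar u ^ (n * k) * s * (u ^ k * cstar u ^ k)"
    using powinv2[OF u2, of k] by simp
  also have "\<dots> = cstar u ^ (n * k) * (s * u ^ k) * cstar u ^ k" by (simp add: mult.assoc)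
  also have "\<dots> = (cstar u ^ (n * k) * u ^ (n * k)) * s * cstar u ^ k"
    using F1[OF su, of k] by (simp add: mult.assoc)
  also have "\<dots> = s * cstar u ^ k" using powinv[OF u1, of "n * k"] by simp
  finally have "cstar u ^ (n * k) * s = s * cstar u ^ k" .
  then have "cstar (cstar u ^ (n * k) * s) = cstar (s * cstar u ^ k)" by simp
  then show ?thesis by (simp add: cstar_mult cstar_power cstar_cstar)
qed

lemma F3:
  fixes s u :: "'a::cstar_algebra"
  assumes s: "cstar s * s = 1" and u1: "cstar u * u = 1" and u2: "u * cstar u = 1"
    and su: "s * u = u ^ n * s"
    and sum: "(\<Sum>i<n. u ^ i * s * cstar s * cstar u ^ i) = 1" and n: "0 < n"
  shows "cstar s * u ^ j * s = (if n dvd j then u ^ (j div n) else 0)"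
proof -
  define q r where "q = j div n" and "r = j mod n"
  have j: "j = n * q + r" by (simp add: q_def r_def)
  have "cstar s * u ^ j * s = (cstar s * u ^ (n * q)) * u ^ r * s"
    by (simp add: j power_add mult.assoc)
  also have "\<dots> = u ^ q * (cstar s * u ^ r * s)" using F2[OF su u1 u2, of q] by (simp add: mult.assoc)
  finally have e: "cstar s * u ^ j * s = u ^ q * (cstar s * u ^ r * s)" .
  show ?thesis
  proof (cases "n dvd j")
    case True
    then have "r = 0" by (simp add: r_def)
    then show ?thesis using e s True by (simp add: q_def)
  next
    case False
    then have "0 < r" "r < n" using n by (auto simp: r_def dvd_eq_mod_eq_0)
    then have "cstar s * u ^ r * s = 0" by (rule orth[OF s u1 u2 sum])
    then show ?thesis using e False by simp
  qed
qed

lemma F3':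
  fixes s u :: "'a::cstar_algebra"
  assumes s: "cstar s * s = 1" and u1: "cstar u * u = 1" and u2: "u * cstar u = 1"
    and su: "s * u = u ^ n * s"
    and sum: "(\<Sum>i<n. u ^ i * s * cstar s * cstar u ^ i) = 1" and n: "0 < n"
  shows "cstar s * cstar u ^ j * s = (if n dvd j then cstar u ^ (j div n) else 0)"
proof -
  have "cstar (cstar s * u ^ j * s) = cstar (if n dvd j then u ^ (j div n) else 0)"
    using F3[OF assms] by simp
  then show ?thesis by (simp add: cstar_mult cstar_power cstar_cstar cstar_zero mult.assoc split: if_splits)
qed


theorem proposition4p7:
  fixes S :: "nat set" and Sf :: "nat \<Rightarrow> 'a::cstar_algebra" and U :: 'a
  assumes "S \<noteq> {}"
    and "S \<subseteq> {n. 0 < n \<and> n \<noteq> 1}"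
    and "\<forall>n\<in>S. isometry (Sf n)"
    and "unitary U"
    and "cstar_generated_by (insert U (Sf ` S))"
    and "\<forall>n\<in>S. Sf n * U = U ^ n * Sf n"
    and "\<forall>n\<in>S. (\<Sum>i<n. U ^ i * Sf n * cstar (Sf n) * cstar U ^ i) = 1"
  shows "(\<forall>n\<in>S. \<forall>m\<in>S. Sf n * Sf m = Sf m * Sf n) \<longleftrightarrow>
    (\<forall>n\<in>S. \<forall>m\<in>S. cstar (Sf n) * Sf m =
       (\<Sum>l\<in>{l. l \<le> n * m - 1 \<and> n dvd l \<and> m dvd l}.
          U ^ (l div n) * Sf m * cstar (Sf n) * cstar U ^ (l div m)))"
proof -
  note Ssub = assms(2) and iso = assms(3) and uni = assms(4) and rel = assms(6) and srel = assms(7)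
  have u1: "cstar U * U = 1" and u2: "U * cstar U = 1" using uni by (auto simp: unitary_def)
  have s1: "cstar (Sf n) * Sf n = 1" if "n \<in> S" for n using iso that by (auto simp: isometry_def)
  have npos: "0 < n" if "n \<in> S" for n using Ssub that by auto
  have F3n: "cstar (Sf n) * U ^ j * Sf n = (if n dvd j then U ^ (j div n) else 0)" if "n \<in> S" for n j
    using F3[OF s1[OF that] u1 u2] rel srel npos that by blast
  have F3n': "cstar (Sf n) * cstar U ^ j * Sf n = (if n dvd j then cstar U ^ (j div n) else 0)" if "n \<in> S" for n j
    using F3'[OF s1[OF that] u1 u2] rel srel npos that by blast
  have F1n: "Sf n * U ^ k = U ^ (n * k) * Sf n" if "n \<in> S" for n k
    using F1 rel that by blast
  show ?thesis
  proof
    assume comm: "\<forall>n\<in>S. \<forall>m\<in>S. Sf n * Sf m = Sf m * Sf n"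
    show "\<forall>n\<in>S. \<forall>m\<in>S. cstar (Sf n) * Sf m =
       (\<Sum>l\<in>{l. l \<le> n * m - 1 \<and> n dvd l \<and> m dvd l}.
          U ^ (l div n) * Sf m * cstar (Sf n) * cstar U ^ (l div m))"
    proof (intro ballI)
      fix n m assume n: "n \<in> S" and m: "m \<in> S"
      define s t where "s = Sf n" and "t = Sf m"
      define L where "L = {l. l \<le> n * m - 1 \<and> n dvd l \<and> m dvd l}"
      define g where "g l = U ^ (l div n) * t * cstar s * cstar U ^ (l div m)" for l
      have mpos: "0 < m" and nposn: "0 < n" using npos n m by auto
      have "cstar s * t = cstar s * t * (\<Sum>i<n. U ^ i * s * cstar s * cstar U ^ i)"
        using srel n by (simp add: s_def)
      also have "\<dots> = (\<Sum>i<n. cstar s * t * (U ^ i * s * cstar s * cstar U ^ i))"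
        by (simp add: sum_distrib_left)
      also have "\<dots> = (\<Sum>i<n. if n dvd m * i then g (m * i) else 0)"
      proof (rule sum.cong[OF refl])
        fix i
        have "cstar s * t * (U ^ i * s * cstar s * cstar U ^ i) = cstar s * (t * U ^ i) * s * cstar s * cstar U ^ i"
          by (simp add: mult.assoc)
        also have "\<dots> = cstar s * U ^ (m * i) * (t * s) * cstar s * cstar U ^ i"
          using F1n[OF m, of i] by (simp add: t_def mult.assoc)
        also have "\<dots> = cstar s * U ^ (m * i) * (s * t) * cstar s * cstar U ^ i"
        proof -
          have ts: "t * s = s * t" using comm n m by (simp add: s_def t_def)
          show ?thesis by (simp only: ts)
        qed
        also have "\<dots> = (cstar s * U ^ (m * i) * s) * (t * cstar s * cstar U ^ i)"
          by (simp add: mult.assoc)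
        also have "\<dots> = (if n dvd m * i then g (m * i) else 0)"
          using F3n[OF n, of "m * i"] mpos by (simp add: s_def g_def mult.assoc)
        finally show "cstar s * t * (U ^ i * s * cstar s * cstar U ^ i) = (if n dvd m * i then g (m * i) else 0)" .
      qed
      also have "\<dots> = (\<Sum>i\<in>{i\<in>{..<n}. n dvd m * i}. g (m * i))"
        by (rule sum.inter_filter[symmetric]) simp
      also have "\<dots> = (\<Sum>l\<in>(\<lambda>i. m * i) ` {i\<in>{..<n}. n dvd m * i}. g l)"
        by (subst sum.reindex) (use mpos in \<open>auto simp: inj_on_def o_def\<close>)
      also have "(\<lambda>i. m * i) ` {i\<in>{..<n}. n dvd m * i} = L"
      proof
        show "(\<lambda>i. m * i) ` {i \<in> {..<n}. n dvd m * i} \<subseteq> L"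
        proof
          fix l assume "l \<in> (\<lambda>i. m * i) ` {i \<in> {..<n}. n dvd m * i}"
          then obtain i where i: "i < n" "n dvd m * i" "l = m * i" by auto
          have "i \<le> n - 1" using i by simp
          then have "m * i \<le> m * (n - 1)" by simp
          also have "\<dots> \<le> n * m - 1" using mpos nposn by (simp add: algebra_simps diff_mult_distrib2)
          finally show "l \<in> L" using i by (simp add: L_def)
        qed
        show "L \<subseteq> (\<lambda>i. m * i) ` {i \<in> {..<n}. n dvd m * i}"
        proof
          fix l assume "l \<in> L"
          then have l: "l \<le> n * m - 1" "n dvd l" "m dvd l" by (auto simp: L_def)
          then obtain i where i: "l = m * i" by auto
          have "0 < n * m" using mpos nposn by simp
          then have "l < n * m" using l(1) by linarith
          then have "m * i < m * n" using i by (simp add: mult.commute)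
          then have "i < n" by simp
          then show "l \<in> (\<lambda>i. m * i) ` {i \<in> {..<n}. n dvd m * i}" using i l by auto
        qed
      qed
      finally show "cstar (Sf n) * Sf m = (\<Sum>l\<in>{l. l \<le> n * m - 1 \<and> n dvd l \<and> m dvd l}.
          U ^ (l div n) * Sf m * cstar (Sf n) * cstar U ^ (l div m))"
        by (simp add: L_def g_def s_def t_def)
    qed
  next
    assume form: "\<forall>n\<in>S. \<forall>m\<in>S. cstar (Sf n) * Sf m =
       (\<Sum>l\<in>{l. l \<le> n * m - 1 \<and> n dvd l \<and> m dvd l}.
          U ^ (l div n) * Sf m * cstar (Sf n) * cstar U ^ (l div m))"
    show "\<forall>n\<in>S. \<forall>m\<in>S. Sf n * Sf m = Sf m * Sf n"
    proof (intro ballI)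
      fix n m assume n: "n \<in> S" and m: "m \<in> S"
      define s t where "s = Sf n" and "t = Sf m"
      define L where "L = {l. l \<le> n * m - 1 \<and> n dvd l \<and> m dvd l}"
      have mpos: "0 < m" and nposn: "0 < n" using npos n m by auto
      have finL: "finite L" unfolding L_def by (rule finite_subset[of _ "{..n * m}"]) auto
      have L0: "0 \<in> L" by (simp add: L_def)
      have fm: "cstar s * t = (\<Sum>l\<in>L. U ^ (l div n) * t * cstar s * cstar U ^ (l div m))"
        using form n m by (simp add: L_def s_def t_def)
      have xy: "cstar (s * t) * (t * s) = 1"
      proof -
        have "cstar (s * t) * (t * s) = cstar t * (cstar s * t) * s"
          by (simp add: cstar_mult mult.assoc)
        also have "\<dots> = (\<Sum>l\<in>L. cstar t * (U ^ (l div n) * t * cstar s * cstar U ^ (l div m)) * s)"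
          by (simp add: fm sum_distrib_left sum_distrib_right)
        also have "\<dots> = (\<Sum>l\<in>L. if l = 0 then 1 else 0)"
        proof (rule sum.cong[OF refl])
          fix l assume lL: "l \<in> L"
          have e: "cstar t * (U ^ (l div n) * t * cstar s * cstar U ^ (l div m)) * s
              = (cstar t * U ^ (l div n) * t) * (cstar s * cstar U ^ (l div m) * s)"
            by (simp add: mult.assoc)
          show "cstar t * (U ^ (l div n) * t * cstar s * cstar U ^ (l div m)) * s = (if l = 0 then 1 else 0)"
          proof (cases "l = 0")
            case True
            then show ?thesis using e s1[OF n] s1[OF m] by (simp add: s_def t_def)
          next
            case False
            from lL have l: "l \<le> n * m - 1" "n dvd l" by (auto simp: L_def)
            then obtain a where a: "l = n * a" by auto
            have "0 < a" using False a by simp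
            moreover have "a < m"
            proof -
              have "0 < n * m" using mpos nposn by simp
              then have "n * a < n * m" using l(1) a by linarith
              then show ?thesis by simp
            qed
            ultimately have "cstar t * U ^ a * t = 0"
              using F3n[OF m, of a] by (simp add: t_def dvd_imp_le) (meson dvd_imp_le not_less)
            then show ?thesis using e a False nposn by simp
          qed
        qed
        also have "\<dots> = 1" using finL L0 by (simp add: sum.delta)
        finally show ?thesis .
      qed
      have yx: "cstar (t * s) * (s * t) = 1"
      proof -
        have "cstar (cstar (s * t) * (t * s)) = 1" using xy by (simp add: cstar_one)
        then show ?thesis by (simp add: cstar_mult cstar_cstar mult.assoc)
      qed
      have xx: "cstar (s * t) * (s * t) = 1"
      proof -
        have "cstar (s * t) * (s * t) = cstar t * (cstar s * s) * t" by (simp add: cstar_mult mult.assoc)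
        then show ?thesis using s1[OF n] s1[OF m] by (simp add: s_def t_def)
      qed
      have yy: "cstar (t * s) * (t * s) = 1"
      proof -
        have "cstar (t * s) * (t * s) = cstar s * (cstar t * t) * s" by (simp add: cstar_mult mult.assoc)
        then show ?thesis using s1[OF n] s1[OF m] by (simp add: s_def t_def)
      qed
      have "cstar (s * t - t * s) * (s * t - t * s) =
          cstar (s * t) * (s * t) - cstar (s * t) * (t * s) - cstar (t * s) * (s * t) + cstar (t * s) * (t * s)"
        by (simp add: cstar_diff algebra_simps)
      also have "\<dots> = 0" by (simp add: xx xy yx yy)
      finally have "norm (s * t - t * s) ^ 2 = 0" by (simp add: cstar_identity[symmetric])
      then show "Sf n * Sf m = Sf m * Sf n" by (simp add: s_def t_def)
    qed
  qed
qed


end
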